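(* If $f\colon[a,b]\to\mathbb{R}$ is Laplace integrable on $[a,b]$ and $f\geqslant0$ almost everywhere on $[a,b]$, then $f$ is Lebesgue integrable on $[a,b]$.
   Context: Laplace integral on $[a,b]$: with lower/upper Laplace derivates $\underline{LD}_1F(x)$, $\overline{LD}_1F(x)$ being the minimum of the $\liminf$'s, resp. maximum of the $\limsup$'s, as $s\to\infty$ of $s^2\int_0^\delta e^{-st}[F(x+t)-F(x)]dt$ and $(-s^2)\int_0^\delta e^{-st}[F(x-t)-F(x)]dt$ (one-sided at endpoints), a major function of $f$ is a continuous $U$ with $\underline{LD}_1U\geqslant f$, $\underline{LD}_1U>-\infty$ everywhere on $[a,b]$, a minor function a continuous $V$ with $\overline{LD}_1V\leqslant f$, $\overline{LD}_1V<\infty$ everywhere, and $f$ is Laplace integrable if $\sup_V(V(b)-V(a))=\inf_U(U(b)-U(a))$ is finite. *)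

theory Defs
  imports "HOL-Analysis.Analysis"
begin

definition lap_right :: "(real \<Rightarrow> real) \<Rightarrow> real \<Rightarrow> real \<Rightarrow> real \<Rightarrow> real" where
  "lap_right F x d s = s^2 * integral {0..d} (\<lambda>t. exp (- s * t) * (F (x + t) - F x))"

definition lap_left :: "(real \<Rightarrow> real) \<Rightarrow> real \<Rightarrow> real \<Rightarrow> real \<Rightarrow> real" where
  "lap_left F x d s = - (s^2 * integral {0..d} (\<lambda>t. exp (- s * t) * (F (x - t) - F x)))"

definition lap_delta :: "real \<Rightarrow> real \<Rightarrow> real \<Rightarrow> real" where
  "lap_delta a b x = (if x = a \<or> x = b then b - a else min (x - a) (b - x))"

definition lower_LD :: "real \<Rightarrow> real \<Rightarrow> (real \<Rightarrow> real) \<Rightarrow> real \<Rightarrow> ereal" where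
  "lower_LD a b F x =
     (if x = a then Liminf at_top (\<lambda>s. ereal (lap_right F x (lap_delta a b x) s))
      else if x = b then Liminf at_top (\<lambda>s. ereal (lap_left F x (lap_delta a b x) s))
      else min (Liminf at_top (\<lambda>s. ereal (lap_right F x (lap_delta a b x) s)))
               (Liminf at_top (\<lambda>s. ereal (lap_left F x (lap_delta a b x) s))))"

definition upper_LD :: "real \<Rightarrow> real \<Rightarrow> (real \<Rightarrow> real) \<Rightarrow> real \<Rightarrow> ereal" where
  "upper_LD a b F x =
     (if x = a then Limsup at_top (\<lambda>s. ereal (lap_right F x (lap_delta a b x) s))
      else if x = b then Limsup at_top (\<lambda>s. ereal (lap_left F x (lap_delta a b x) s))
      else max (Limsup at_top (\<lambda>s. ereal (lap_right F x (lap_delta a b x) s)))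
               (Limsup at_top (\<lambda>s. ereal (lap_left F x (lap_delta a b x) s))))"

definition laplace_major :: "real \<Rightarrow> real \<Rightarrow> (real \<Rightarrow> real) \<Rightarrow> (real \<Rightarrow> real) \<Rightarrow> bool" where
  "laplace_major a b f U \<longleftrightarrow> continuous_on {a..b} U \<and>
     (\<forall>x\<in>{a..b}. lower_LD a b U x \<ge> ereal (f x) \<and> lower_LD a b U x > -\<infinity>)"

definition laplace_minor :: "real \<Rightarrow> real \<Rightarrow> (real \<Rightarrow> real) \<Rightarrow> (real \<Rightarrow> real) \<Rightarrow> bool" where
  "laplace_minor a b f V \<longleftrightarrow> continuous_on {a..b} V \<and>
     (\<forall>x\<in>{a..b}. upper_LD a b V x \<le> ereal (f x) \<and> upper_LD a b V x < \<infinity>)"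

definition laplace_integrable_on :: "(real \<Rightarrow> real) \<Rightarrow> real \<Rightarrow> real \<Rightarrow> bool" where
  "laplace_integrable_on f a b \<longleftrightarrow>
     (\<exists>I::real. (SUP V\<in>{V. laplace_minor a b f V}. ereal (V b - V a)) = ereal I \<and>
                (INF U\<in>{U. laplace_major a b f U}. ereal (U b - U a)) = ereal I)"

end

theory Submission
  imports Defs "HOL-Real_Asymp.Real_Asymp"
begin

lemma J_has_integral:
  fixes s d :: real
  assumes "s > 0" "d \<ge> 0"
  shows "((\<lambda>t. t * exp (- s * t)) has_integral (1 - exp (- s * d) * (1 + s * d)) / s^2) {0..d}"
proof -
  define P where "P t = - (t / s + 1 / s^2) * exp (- s * t)" for t
  have "((\<lambda>t. t * exp (- s * t)) has_integral (P d - P 0)) {0..d}"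
  proof (rule fundamental_theorem_of_calculus)
    show "0 \<le> d" by fact
    fix t assume "t \<in> {0..d}"
    show "(P has_vector_derivative t * exp (- s * t)) (at t within {0..d})"
      unfolding P_def has_real_derivative_iff_has_vector_derivative[symmetric]
      using assms
      by (auto intro!: derivative_eq_intros simp: field_simps power2_eq_square)
  qed
  moreover have "P d - P 0 = (1 - exp (- s * d) * (1 + s * d)) / s^2"
    using assms by (simp add: P_def field_simps power2_eq_square)
  ultimately show ?thesis by simp
qed

lemma J_tendsto:
  fixes d :: real
  assumes "d > 0"
  shows "((\<lambda>s. s^2 * integral {0..d} (\<lambda>t. t * exp (- s * t))) \<longlongrightarrow> 1) at_top"
proof -
  have "\<forall>\<^sub>F s in at_top. 1 - exp (- s * d) * (1 + s * d) = s^2 * integral {0..d} (\<lambda>t. t * exp (- s * t))"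
    using eventually_gt_at_top[of 0]
  proof eventually_elim
    case (elim s)
    then show ?case using J_has_integral[of s d] assms
      by (simp add: integral_unique)
  qed
  moreover have "((\<lambda>s. 1 - exp (- s * d) * (1 + s * d)) \<longlongrightarrow> 1) at_top"
    using assms by real_asymp
  ultimately show ?thesis using tendsto_cong by fastforce
qed

lemma J_le1:
  fixes s d :: real
  assumes "s \<ge> 0" "d \<ge> 0"
  shows "s^2 * integral {0..d} (\<lambda>t. t * exp (- s * t)) \<le> 1"
proof (cases "s = 0")
  case True then show ?thesis by simp
next
  case False
  then have "s > 0" using assms by simp
  then have "s^2 * integral {0..d} (\<lambda>t. t * exp (- s * t)) = 1 - exp (- s * d) * (1 + s * d)"
    using J_has_integral[of s d] assms by (simp add: integral_unique)
  moreover have "exp (- s * d) * (1 + s * d) \<ge> 0" using assms by simp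
  ultimately show ?thesis by simp
qed

lemma exp_sq_tendsto:
  fixes e C :: real
  assumes "e > 0"
  shows "((\<lambda>s. C * s^2 * exp (- s * e)) \<longlongrightarrow> 0) at_top"
  using assms by real_asymp

lemma lap_right_LB:
  fixes F :: "real \<Rightarrow> real"
  assumes eta: "0 < \<eta>" "\<eta> \<le> \<delta>" and cont: "continuous_on {x..x+\<delta>} F" and M: "M \<ge> 0"
    and lin: "\<And>t. t \<in> {0..\<eta>} \<Longrightarrow> c * t \<le> F (x+t) - F x"
    and bnd: "\<And>t. t \<in> {0..\<delta>} \<Longrightarrow> - M \<le> F (x+t) - F x"
    and c': "c' < c"
  shows "\<forall>\<^sub>F s in at_top. c' < lap_right F x \<delta> s"
proof -
  define K where "K = M + \<bar>c\<bar> * \<delta>"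
  have K: "K \<ge> 0" using M eta by (simp add: K_def)
  define R where "R s = c * (s^2 * integral {0..\<delta>} (\<lambda>t. t * exp (- s * t))) - K * \<delta> * s^2 * exp (- s * \<eta>)" for s
  have "(R \<longlongrightarrow> c * 1 - 0) at_top"
    unfolding R_def
    by (intro tendsto_intros J_tendsto exp_sq_tendsto) (use eta in auto)
  then have ev1: "\<forall>\<^sub>F s in at_top. c' < R s"
    using c' by (intro order_tendstoD) auto
  have contF: "continuous_on {0..\<delta>} (\<lambda>t. exp (- s * t) * (F (x + t) - F x))" for s
  proof -
    have "continuous_on {0..\<delta>} (\<lambda>t. F (x + t))"
      by (rule continuous_on_compose2[OF cont]) (auto intro!: continuous_intros)
    then show ?thesis by (auto intro!: continuous_intros)
  qed
  have ev2: "\<forall>\<^sub>F s in at_top. R s \<le> lap_right F x \<delta> s"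
    using eventually_gt_at_top[of 0]
  proof eventually_elim
    case (elim s)
    have pw: "c * (t * exp (- s * t)) - K * exp (- s * \<eta>) \<le> exp (- s * t) * (F (x + t) - F x)"
      if t: "t \<in> {0..\<delta>}" for t
    proof (cases "t \<le> \<eta>")
      case True
      then have "exp (- s * t) * (c * t) \<le> exp (- s * t) * (F (x + t) - F x)"
        using lin[of t] t by (intro mult_left_mono) auto
      moreover have "K * exp (- s * \<eta>) \<ge> 0" using K by simp
      ultimately show ?thesis by (simp add: algebra_simps)
    next
      case False
      have e1: "exp (- s * t) \<le> exp (- s * \<eta>)" using False elim by simp
      have "- M * exp (- s * \<eta>) \<le> - M * exp (- s * t)"
        using e1 M by (simp add: mult_left_mono)
      also have "\<dots> \<le> exp (- s * t) * (F (x + t) - F x)"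
        using mult_left_mono[OF bnd[OF t], of "exp (- s * t)"] by (simp add: algebra_simps)
      finally have A: "- M * exp (- s * \<eta>) \<le> exp (- s * t) * (F (x + t) - F x)" .
      have "c * (t * exp (- s * t)) \<le> \<bar>c\<bar> * (t * exp (- s * t))"
        using t by (intro mult_right_mono) auto
      also have "\<dots> \<le> \<bar>c\<bar> * (\<delta> * exp (- s * \<eta>))"
        using t e1 by (intro mult_left_mono mult_mono) auto
      finally have B: "c * (t * exp (- s * t)) \<le> \<bar>c\<bar> * \<delta> * exp (- s * \<eta>)" by simp
      show ?thesis using A B by (simp add: K_def algebra_simps)
    qed
    have int1: "((\<lambda>t. c * (t * exp (- s * t)) - K * exp (- s * \<eta>)) has_integral
        c * integral {0..\<delta>} (\<lambda>t. t * exp (- s * t)) - K * exp (- s * \<eta>) * \<delta>) {0..\<delta>}"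
    proof -
      have "(\<lambda>t. t * exp (- s * t)) integrable_on {0..\<delta>}"
        by (intro integrable_continuous_real continuous_intros)
      then have "((\<lambda>t. c * (t * exp (- s * t))) has_integral c * integral {0..\<delta>} (\<lambda>t. t * exp (- s * t))) {0..\<delta>}"
        by (intro has_integral_mult_right integrable_integral)
      moreover have "((\<lambda>t. K * exp (- s * \<eta>)) has_integral K * exp (- s * \<eta>) * \<delta>) {0..\<delta>}"
        using has_integral_const_real[of "K * exp (- s * \<eta>)" 0 \<delta>] eta by (simp add: mult.commute)
      ultimately show ?thesis by (rule has_integral_diff)
    qed
    have "c * integral {0..\<delta>} (\<lambda>t. t * exp (- s * t)) - K * exp (- s * \<eta>) * \<delta>
          \<le> integral {0..\<delta>} (\<lambda>t. exp (- s * t) * (F (x + t) - F x))"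
      using int1 pw integrable_continuous_real[OF contF[of s]]
      by (intro has_integral_le[OF int1 integrable_integral]) auto
    then have "s^2 * (c * integral {0..\<delta>} (\<lambda>t. t * exp (- s * t)) - K * exp (- s * \<eta>) * \<delta>)
          \<le> s^2 * integral {0..\<delta>} (\<lambda>t. exp (- s * t) * (F (x + t) - F x))"
      by (intro mult_left_mono) auto
    then show ?case by (simp add: R_def lap_right_def algebra_simps)
  qed
  from ev1 ev2 show ?thesis by eventually_elim simp
qed

lemma lap_right_UB:
  fixes F :: "real \<Rightarrow> real"
  assumes eta: "0 < \<eta>" "\<eta> \<le> \<delta>" and cont: "continuous_on {x..x+\<delta>} F" and M: "M \<ge> 0"
    and lin: "\<And>t. t \<in> {0..\<eta>} \<Longrightarrow> F (x+t) - F x \<le> c * t"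
    and bnd: "\<And>t. t \<in> {0..\<delta>} \<Longrightarrow> F (x+t) - F x \<le> M"
    and c': "c < c'"
  shows "\<forall>\<^sub>F s in at_top. lap_right F x \<delta> s < c'"
proof -
  have "\<forall>\<^sub>F s in at_top. - c' < lap_right (\<lambda>y. - F y) x \<delta> s"
    by (rule lap_right_LB[OF eta _ M, where c="-c"])
      (use cont c' lin bnd in \<open>force intro!: continuous_intros\<close>)+
  moreover have "lap_right (\<lambda>y. - F y) x \<delta> s = - lap_right F x \<delta> s" for s
  proof -
    have "(\<lambda>t. exp (- s * t) * (- F (x + t) - - F x)) = (\<lambda>t. - (exp (- s * t) * (F (x + t) - F x)))"
      by (simp add: algebra_simps)
    then show ?thesis unfolding lap_right_def by (simp add: integral_neg)
  qed
  ultimately show ?thesis by simp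
qed

lemma lap_delta_props:
  assumes "a < b" "x \<in> {a..<b}"
  shows "0 < lap_delta a b x" "x + lap_delta a b x \<le> b" "lap_delta a b x \<le> b - a"
  using assms by (auto simp: lap_delta_def)

lemma lower_LD_le_right:
  assumes "x \<in> {a..<b}"
  shows "lower_LD a b F x \<le> Liminf at_top (\<lambda>s. ereal (lap_right F x (lap_delta a b x) s))"
  using assms by (auto simp: lower_LD_def)

lemma upper_LD_ge_right:
  assumes "x \<in> {a..<b}"
  shows "Limsup at_top (\<lambda>s. ereal (lap_right F x (lap_delta a b x) s)) \<le> upper_LD a b F x"
  using assms by (auto simp: upper_LD_def)

lemma from_major:
  assumes "laplace_major a b f U" "x \<in> {a..<b}" "c < f x"
  shows "\<forall>\<^sub>F s in at_top. c < lap_right U x (lap_delta a b x) s"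
proof -
  have "ereal (f x) \<le> Liminf at_top (\<lambda>s. ereal (lap_right U x (lap_delta a b x) s))"
    using assms(1,2) lower_LD_le_right[OF assms(2), of U] unfolding laplace_major_def
    by (meson atLeastAtMost_iff atLeastLessThan_iff less_imp_le order_trans)
  then have "\<forall>y<ereal (f x). \<forall>\<^sub>F s in at_top. y < ereal (lap_right U x (lap_delta a b x) s)"
    by (simp add: le_Liminf_iff)
  from this[rule_format, of "ereal c"] assms(3) show ?thesis by simp
qed

lemma from_minor:
  assumes "laplace_minor a b f V" "x \<in> {a..<b}" "f x < c"
  shows "\<forall>\<^sub>F s in at_top. lap_right V x (lap_delta a b x) s < c"
proof -
  have "Limsup at_top (\<lambda>s. ereal (lap_right V x (lap_delta a b x) s)) \<le> ereal (f x)"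
    using assms(1,2) upper_LD_ge_right[OF assms(2), of V] unfolding laplace_minor_def
    by (meson atLeastAtMost_iff atLeastLessThan_iff less_imp_le order_trans)
  then have "\<forall>y>ereal (f x). \<forall>\<^sub>F s in at_top. ereal (lap_right V x (lap_delta a b x) s) < y"
    by (simp add: Limsup_le_iff)
  from this[rule_format, of "ereal c"] assms(3) show ?thesis by simp
qed

lemma integrable_lap:
  fixes F :: "real \<Rightarrow> real"
  assumes "continuous_on {x..x+d} F"
  shows "(\<lambda>t. exp (- s * t) * (F (x + t) - F x)) integrable_on {0..d}"
proof -
  have "continuous_on {0..d} (\<lambda>t. F (x + t))"
    by (rule continuous_on_compose2[OF assms]) (auto intro!: continuous_intros)
  then show ?thesis by (auto intro!: continuous_intros integrable_continuous_real)
qed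

lemma lap_right_diff:
  assumes "continuous_on {x..x+d} U" "continuous_on {x..x+d} V"
  shows "lap_right (\<lambda>y. U y - V y) x d s = lap_right U x d s - lap_right V x d s"
proof -
  have eq: "(\<lambda>t. exp (- s * t) * ((U (x + t) - V (x + t)) - (U x - V x))) =
        (\<lambda>t. exp (- s * t) * (U (x + t) - U x) - exp (- s * t) * (V (x + t) - V x))"
    by (simp add: algebra_simps)
  have "integral {0..d} (\<lambda>t. exp (- s * t) * (U (x + t) - U x) - exp (- s * t) * (V (x + t) - V x))
     = integral {0..d} (\<lambda>t. exp (- s * t) * (U (x + t) - U x)) - integral {0..d} (\<lambda>t. exp (- s * t) * (V (x + t) - V x))"
    (is "?ii") by (rule integral_diff[OF integrable_lap[OF assms(1)] integrable_lap[OF assms(2)]])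
  then have ii: ?ii .
  show ?thesis
    unfolding lap_right_def eq ii by (rule right_diff_distrib)
qed

lemma lap_right_add:
  assumes "continuous_on {x..x+d} U" "continuous_on {x..x+d} V"
  shows "lap_right (\<lambda>y. U y + V y) x d s = lap_right U x d s + lap_right V x d s"
proof -
  have eq: "(\<lambda>t. exp (- s * t) * ((U (x + t) + V (x + t)) - (U x + V x))) =
        (\<lambda>t. exp (- s * t) * (U (x + t) - U x) + exp (- s * t) * (V (x + t) - V x))"
    by (simp add: algebra_simps)
  have "integral {0..d} (\<lambda>t. exp (- s * t) * (U (x + t) - U x) + exp (- s * t) * (V (x + t) - V x))
     = integral {0..d} (\<lambda>t. exp (- s * t) * (U (x + t) - U x)) + integral {0..d} (\<lambda>t. exp (- s * t) * (V (x + t) - V x))"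
    (is "?ii") by (rule integral_add[OF integrable_lap[OF assms(1)] integrable_lap[OF assms(2)]])
  then have ii: ?ii .
  show ?thesis
    unfolding lap_right_def eq ii by (rule distrib_left)
qed

lemma cont_sub:
  assumes "continuous_on {a..b} F" "a < b" "x \<in> {a..<b}"
  shows "continuous_on {x..x + lap_delta a b x} F"
  using continuous_on_subset[OF assms(1)] lap_delta_props[OF assms(2,3)] assms(3) by auto

lemma mono_from_right:
  fixes H :: "real \<Rightarrow> real"
  assumes ab: "a < b" and cont: "continuous_on {a..b} H"
    and hyp: "\<And>x c. x \<in> {a..<b} \<Longrightarrow> c < 0 \<Longrightarrow> \<forall>\<^sub>F s in at_top. c < lap_right H x (lap_delta a b x) s"
    and xy: "a \<le> x" "x \<le> y" "y \<le> b"
  shows "H x \<le> H y"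
proof (rule ccontr)
  assume "\<not> H x \<le> H y"
  then have Hxy: "H y < H x" by simp
  then have "x < y" using xy by (cases "x = y") auto
  define \<epsilon> where "\<epsilon> = (H x - H y) / (2 * (y - x))"
  have \<epsilon>: "\<epsilon> > 0" using Hxy \<open>x < y\<close> by (simp add: \<epsilon>_def)
  define K where "K z = H z + \<epsilon> * z" for z
  have contxy: "continuous_on {x..y} H"
    using continuous_on_subset[OF cont] xy by auto
  then have contK: "continuous_on {x..y} K"
    unfolding K_def by (auto intro!: continuous_intros)
  obtain z0 where z0: "z0 \<in> {x..y}" "\<forall>z\<in>{x..y}. K z \<le> K z0"
    using continuous_attains_sup[OF compact_Icc _ contK] \<open>x < y\<close> by auto
  define T where "T = {z \<in> {x..y}. K z = K z0}"
  have "closed T" unfolding T_def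
    by (rule continuous_closed_preimage_constant[OF contK closed_atLeastAtMost])
  moreover have "bounded T" unfolding T_def by (rule bounded_subset[of "{x..y}"]) auto
  ultimately have "compact T" by (simp add: compact_eq_bounded_closed)
  moreover have "T \<noteq> {}" using z0 by (auto simp: T_def)
  ultimately obtain x0 where x0: "x0 \<in> T" "\<forall>t\<in>T. t \<le> x0"
    using compact_attains_sup by blast
  have x0xy: "x0 \<in> {x..y}" and Kx0: "K x0 = K z0" using x0 by (auto simp: T_def)
  have "\<epsilon> * (y - x) = (H x - H y) / 2" using \<open>x < y\<close> by (simp add: \<epsilon>_def field_simps)
  then have "K y < K x"
    using Hxy by (simp add: K_def algebra_simps)
  then have "x0 < y"
    using z0 Kx0 x0xy by (metis atLeastAtMost_iff leD order.order_iff_strict xy(2) order_refl)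
  have lin: "H (x0 + t) - H x0 \<le> (- \<epsilon>) * t" if "t \<in> {0..min (lap_delta a b x0) (y - x0)}" for t
  proof -
    have "x0 + t \<in> {x..y}" using that x0xy by auto
    then have "K (x0 + t) \<le> K x0" using z0 Kx0 by auto
    then show ?thesis by (simp add: K_def algebra_simps)
  qed
  have x0ab: "x0 \<in> {a..<b}" using x0xy \<open>x0 < y\<close> xy by auto
  note dp = lap_delta_props[OF ab x0ab]
  obtain B where B: "\<forall>z\<in>{a..b}. \<bar>H z\<bar> \<le> B"
    using compact_imp_bounded[OF compact_continuous_image[OF cont compact_Icc]]
    by (auto simp: bounded_real)
  have B0: "B \<ge> 0" using B ab by force
  have bnd: "H (x0 + t) - H x0 \<le> 2 * B" if "t \<in> {0..lap_delta a b x0}" for t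
  proof -
    have "x0 + t \<in> {a..b}" using that dp x0ab by auto
    then have "\<bar>H (x0 + t)\<bar> \<le> B" "\<bar>H x0\<bar> \<le> B" using B x0ab by auto
    then show ?thesis by linarith
  qed
  have ev1: "\<forall>\<^sub>F s in at_top. lap_right H x0 (lap_delta a b x0) s < - \<epsilon> / 2"
    by (rule lap_right_UB[where c = "-\<epsilon>" and M = "2*B" and \<eta> = "min (lap_delta a b x0) (y - x0)"])
       (use dp \<open>x0 < y\<close> lin bnd \<epsilon> B0 cont_sub[OF cont ab x0ab] in auto)
  have ev2: "\<forall>\<^sub>F s in at_top. - \<epsilon> / 2 < lap_right H x0 (lap_delta a b x0) s"
    using hyp[OF x0ab] \<epsilon> by simp
  have "\<forall>\<^sub>F (s::real) in at_top. False" by (rule eventually_mono[OF eventually_conj[OF ev1 ev2]]) auto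
  then show False by simp
qed

lemma open_Int_Icc_lmeasurable:
  fixes Q :: "real set"
  assumes "open Q"
  shows "Q \<inter> {x..y} \<in> lmeasurable"
  by (rule bounded_set_imp_lmeasurable) (auto simp: assms bounded_Int)

lemma ind_integrable: "open Q \<Longrightarrow> indicat_real Q integrable_on {x..y::real}"
  by (simp add: integrable_on_indicator open_Int_Icc_lmeasurable)

lemma ind_int_bounds:
  fixes Q :: "real set"
  assumes "open Q" "x \<le> y"
  shows "0 \<le> integral {x..y} (indicat_real Q)" "integral {x..y} (indicat_real Q) \<le> y - x"
proof -
  show "0 \<le> integral {x..y} (indicat_real Q)"
    by (rule integral_nonneg[OF ind_integrable[OF assms(1)]]) auto
  have "integral {x..y} (indicat_real Q) \<le> integral {x..y} (\<lambda>_. 1::real)"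
    by (rule integral_le[OF ind_integrable[OF assms(1)]]) (auto simp: indicator_def)
  then show "integral {x..y} (indicat_real Q) \<le> y - x" using assms by simp
qed

lemma ind_int_full:
  fixes Q :: "real set"
  assumes "{x..y} \<subseteq> Q" "x \<le> y"
  shows "integral {x..y} (indicat_real Q) = y - x"
proof -
  have "integral {x..y} (indicat_real Q) = integral {x..y} (\<lambda>_. 1::real)"
    by (rule integral_cong) (use assms in \<open>auto simp: indicator_def\<close>)
  then show ?thesis using assms by simp
qed

lemma ind_int_combine:
  fixes Q :: "real set"
  assumes "open Q" "a \<le> x" "x \<le> y"
  shows "integral {a..y} (indicat_real Q) - integral {a..x} (indicat_real Q) = integral {x..y} (indicat_real Q)"
  using Henstock_Kurzweil_Integration.integral_combine[OF assms(2,3) ind_integrable[OF assms(1)]] by simp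

lemma null_psi:
  fixes N :: "real set"
  assumes ab: "a < b" and N: "N \<in> null_sets lebesgue" and \<epsilon>: "\<epsilon> > 0"
  obtains \<psi> where "continuous_on {a..b} \<psi>"
    "\<And>x y. a \<le> x \<Longrightarrow> x \<le> y \<Longrightarrow> y \<le> b \<Longrightarrow> \<psi> x \<le> \<psi> y" "\<psi> b - \<psi> a \<le> \<epsilon>"
    "\<And>x c. x \<in> N \<Longrightarrow> x \<in> {a..<b} \<Longrightarrow> \<forall>\<^sub>F s in at_top. c < lap_right \<psi> x (lap_delta a b x) s"
proof -
  define w where "w k = \<epsilon> * (1/2)^(Suc k)" for k :: nat
  have w0: "w k > 0" for k using \<epsilon> by (simp add: w_def)
  have wsum: "w sums \<epsilon>"
  proof -
    have "(\<lambda>k. (1/2::real)^k) sums (1 / (1 - 1/2))" by (rule geometric_sums) simp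
    then have "(\<lambda>k. (\<epsilon> / 2) * (1/2::real)^k) sums ((\<epsilon>/2) * (1 / (1 - 1/2)))" by (rule sums_mult)
    moreover have "w = (\<lambda>k. (\<epsilon> / 2) * (1/2::real)^k)" by (auto simp: w_def fun_eq_iff)
    ultimately show ?thesis by simp
  qed
  have "\<exists>T. open T \<and> N \<subseteq> T \<and> emeasure lebesgue (T \<inter> {a..b}) < ennreal (w k)" for k
  proof -
    obtain T where T: "open T" "N \<subseteq> T" "T - N \<in> lmeasurable" "emeasure lebesgue (T - N) < ennreal (w k)"
      using sets_lebesgue_outer_open[of N "w k"] N w0[of k] by auto
    have "emeasure lebesgue (T \<inter> {a..b}) \<le> emeasure lebesgue ((T - N) \<union> N)"
      using T N by (intro emeasure_mono) auto
    also have "\<dots> \<le> emeasure lebesgue (T - N) + emeasure lebesgue N"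
      using T N by (intro emeasure_subadditive) auto
    also have "\<dots> = emeasure lebesgue (T - N)" using N by (simp add: null_setsD1)
    finally show ?thesis using T by (intro exI[of _ T]) auto
  qed
  then obtain T where T: "\<And>k. open (T k)" "\<And>k. N \<subseteq> T k" "\<And>k. emeasure lebesgue (T k \<inter> {a..b}) < ennreal (w k)"
    by metis
  define Q where "Q k = (\<Inter>j\<in>{..k}. T j)" for k
  have Oopen: "open (Q k)" for k unfolding Q_def using T(1) by (intro open_INT) auto
  have NO: "N \<subseteq> Q k" for k unfolding Q_def using T(2) by auto
  have Qanti: "j \<le> k \<Longrightarrow> Q k \<subseteq> Q j" for j k unfolding Q_def by auto
  have Qmeas: "measure lebesgue (Q k \<inter> {a..b}) \<le> w k" for k
  proof -
    have "emeasure lebesgue (Q k \<inter> {a..b}) \<le> emeasure lebesgue (T k \<inter> {a..b})"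
      using T(1) by (intro emeasure_mono) (auto simp: Q_def)
    also have "\<dots> < ennreal (w k)" by (rule T(3))
    finally have lt: "emeasure lebesgue (Q k \<inter> {a..b}) < ennreal (w k)" .
    then have "emeasure lebesgue (Q k \<inter> {a..b}) = ennreal (measure lebesgue (Q k \<inter> {a..b}))"
      by (intro emeasure_eq_ennreal_measure) (auto simp: top_unique)
    with lt show ?thesis using w0[of k] by (simp add: ennreal_less_iff)
  qed
  define p where "p k x = integral {a..x} (indicat_real (Q k))" for k x
  have p_b: "p k b \<le> w k" for k
    unfolding p_def using Qmeas[of k] integral_indicator[OF open_Int_Icc_lmeasurable[OF Oopen]] by simp
  have p_diff: "p k y - p k x = integral {x..y} (indicat_real (Q k))" if "a \<le> x" "x \<le> y" for k x y
    unfolding p_def using ind_int_combine[OF Oopen that] .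
  have p_mono: "p k x \<le> p k y" if "a \<le> x" "x \<le> y" for k x y
    using p_diff[OF that, of k] ind_int_bounds(1)[OF Oopen that(2), of k] by simp
  have p_a: "p k a = 0" for k unfolding p_def by simp
  have p_bnd: "norm (p k x) \<le> w k" if "x \<in> {a..b}" for k x
  proof -
    have "0 \<le> p k x" using p_mono[of a x k] p_a that by auto
    moreover have "p k x \<le> p k b" using p_mono[of x b k] that by auto
    ultimately show ?thesis using p_b[of k] by simp
  qed
  have summ: "summable (\<lambda>k. p k x)" if "x \<in> {a..b}" for x
    by (rule summable_comparison_test[OF _ sums_summable[OF wsum]]) (use p_bnd[OF that] in auto)
  define \<psi> where "\<psi> x = (\<Sum>k. p k x)" for x
  have cont: "continuous_on {a..b} \<psi>"
  proof -
    have ul: "uniform_limit {a..b} (\<lambda>n x. \<Sum>k<n. p k x) (\<lambda>x. \<Sum>k. p k x) sequentially"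
      by (rule Weierstrass_m_test[OF _ sums_summable[OF wsum]]) (use p_bnd in auto)
    have "continuous_on {a..b} (p k)" for k
      unfolding p_def by (rule indefinite_integral_continuous_1[OF ind_integrable[OF Oopen]])
    then have "continuous_on {a..b} (\<lambda>x. \<Sum>k<n. p k x)" for n
      by (auto intro!: continuous_on_sum)
    then have "\<forall>\<^sub>F n in sequentially. continuous_on {a..b} (\<lambda>x. \<Sum>k<n. p k x)"
      by simp
    from uniform_limit_theorem[OF this ul] show ?thesis by (simp add: \<psi>_def)
  qed
  have mono: "\<psi> x \<le> \<psi> y" if "a \<le> x" "x \<le> y" "y \<le> b" for x y
    unfolding \<psi>_def using that by (intro suminf_le summ p_mono) auto
  have diff: "\<psi> y - \<psi> x = (\<Sum>k. p k y - p k x)" if "a \<le> x" "x \<le> y" "y \<le> b" for x y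
    unfolding \<psi>_def using that by (intro suminf_diff summ) auto
  have tot: "\<psi> b - \<psi> a \<le> \<epsilon>"
  proof -
    have "\<psi> a = 0" by (simp add: \<psi>_def p_a)
    moreover have "\<psi> b \<le> \<epsilon>"
      unfolding \<psi>_def sums_unique[OF wsum]
      using ab p_b by (intro suminf_le summ sums_summable[OF wsum]) auto
    ultimately show ?thesis by simp
  qed
  have quot: "\<forall>\<^sub>F s in at_top. c < lap_right \<psi> x (lap_delta a b x) s"
    if x: "x \<in> N" "x \<in> {a..<b}" for x c
  proof -
    obtain K :: nat where K: "real K > c" "K \<ge> 1"
      using reals_Archimedean2[of "max c 0"] by (metis le_less_trans max.cobounded1 max.cobounded2 nat_le_real_less of_nat_1 of_nat_le_iff not_less)
    obtain r where r: "r > 0" "ball x r \<subseteq> Q (K - 1)"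
      using Oopen[of "K - 1"] NO[of "K - 1"] x(1) by (meson in_mono openE)
    note dp = lap_delta_props[OF ab x(2)]
    define \<eta> where "\<eta> = min (r/2) (lap_delta a b x)"
    have \<eta>: "0 < \<eta>" "\<eta> \<le> lap_delta a b x" using r dp by (auto simp: \<eta>_def)
    show ?thesis
    proof (rule lap_right_LB[OF \<eta> _ order_refl, where c = "real K"])
      show "continuous_on {x..x + lap_delta a b x} \<psi>" using cont_sub[OF cont ab x(2)] .
      show "c < real K" using K by simp
    next
      fix t assume t: "t \<in> {0..lap_delta a b x}"
      then show "- 0 \<le> \<psi> (x + t) - \<psi> x" using mono[of x "x + t"] x dp by auto
    next
      fix t assume t: "t \<in> {0..\<eta>}"
      have xt: "a \<le> x" "x \<le> x + t" "x + t \<le> b" using t x \<eta> dp by auto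
      have sub: "{x..x+t} \<subseteq> Q k" if "k < K" for k
      proof -
        have "{x..x+t} \<subseteq> ball x r"
          using t r by (auto simp: \<eta>_def dist_real_def)
        also have "\<dots> \<subseteq> Q (K - 1)" by (rule r(2))
        also have "\<dots> \<subseteq> Q k" using that by (intro Qanti) auto
        finally show ?thesis .
      qed
      have "real K * t = (\<Sum>k<K. p k (x + t) - p k x)"
        using p_diff[OF xt(1,2)] ind_int_full[OF sub] xt by simp
      also have "\<dots> \<le> (\<Sum>k. p k (x + t) - p k x)"
        using xt
        by (intro sum_le_suminf summable_diff summ) (auto intro: p_mono simp: algebra_simps)
      also have "\<dots> = \<psi> (x + t) - \<psi> x" using diff[OF xt(1,2,3)] by simp
      finally show "real K * t \<le> \<psi> (x + t) - \<psi> x" .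
    qed
  qed
  show ?thesis using that[OF cont mono tot quot] by blast
qed

lemma lap_right_nonneg_mono:
  assumes ab: "a < b" and x: "x \<in> {a..<b}" and cont: "continuous_on {a..b} F"
    and mono: "\<And>x y. a \<le> x \<Longrightarrow> x \<le> y \<Longrightarrow> y \<le> b \<Longrightarrow> F x \<le> F y"
  shows "0 \<le> lap_right F x (lap_delta a b x) s"
proof -
  note dp = lap_delta_props[OF ab x]
  have "0 \<le> integral {0..lap_delta a b x} (\<lambda>t. exp (- s * t) * (F (x + t) - F x))"
    by (rule integral_nonneg[OF integrable_lap[OF cont_sub[OF cont ab x]]])
       (use x dp mono[of x "x + _"] in \<open>force intro!: mult_nonneg_nonneg\<close>)
  then show ?thesis unfolding lap_right_def by simp
qed

lemma major_mono:
  assumes ab: "a < b" and maj: "laplace_major a b f U"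
    and ae: "AE x in lebesgue. x \<in> {a..b} \<longrightarrow> f x \<ge> 0"
    and xy: "a \<le> x" "x \<le> y" "y \<le> b"
  shows "U x \<le> U y"
proof -
  obtain N where N: "{x \<in> space lebesgue. \<not> (x \<in> {a..b} \<longrightarrow> f x \<ge> 0)} \<subseteq> N" "N \<in> null_sets lebesgue"
    using AE_E[OF ae] by (metis null_setsI)
  have contU: "continuous_on {a..b} U" using maj by (simp add: laplace_major_def)
  show ?thesis
  proof (rule field_le_epsilon)
    fix \<epsilon> :: real assume \<epsilon>: "0 < \<epsilon>"
    obtain \<psi> where \<psi>: "continuous_on {a..b} \<psi>"
      "\<And>x y. a \<le> x \<Longrightarrow> x \<le> y \<Longrightarrow> y \<le> b \<Longrightarrow> \<psi> x \<le> \<psi> y" "\<psi> b - \<psi> a \<le> \<epsilon>"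
      "\<And>x c. x \<in> N \<Longrightarrow> x \<in> {a..<b} \<Longrightarrow> \<forall>\<^sub>F s in at_top. c < lap_right \<psi> x (lap_delta a b x) s"
      apply (rule null_psi[OF ab N(2) \<epsilon>])
      apply (rule that)
      apply assumption+
      done
    have contH: "continuous_on {a..b} (\<lambda>z. U z + \<psi> z)"
      using contU \<psi>(1) by (intro continuous_on_add)
    have "U x + \<psi> x \<le> U y + \<psi> y"
    proof (rule mono_from_right[OF ab contH _ xy])
      fix z c :: real assume z: "z \<in> {a..<b}" and c: "c < 0"
      have split: "lap_right (\<lambda>z. U z + \<psi> z) z (lap_delta a b z) s =
          lap_right U z (lap_delta a b z) s + lap_right \<psi> z (lap_delta a b z) s" for s
        by (rule lap_right_add[OF cont_sub[OF contU ab z] cont_sub[OF \<psi>(1) ab z]])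
      show "\<forall>\<^sub>F s in at_top. c < lap_right (\<lambda>z. U z + \<psi> z) z (lap_delta a b z) s"
      proof (cases "z \<in> N")
        case True
        have e1: "\<forall>\<^sub>F s in at_top. f z - 1 < lap_right U z (lap_delta a b z) s"
          by (rule from_major[OF maj z]) simp
        have e2: "\<forall>\<^sub>F s in at_top. c - (f z - 1) < lap_right \<psi> z (lap_delta a b z) s"
          by (rule \<psi>(4)[OF True z])
        show ?thesis unfolding split using e1 e2 by eventually_elim simp
      next
        case False
        then have "f z \<ge> 0" using N(1) z by fastforce
        then have e1: "\<forall>\<^sub>F s in at_top. c < lap_right U z (lap_delta a b z) s"
          using c by (intro from_major[OF maj z]) simp
        have "0 \<le> lap_right \<psi> z (lap_delta a b z) s" for s
          by (rule lap_right_nonneg_mono[OF ab z \<psi>(1) \<psi>(2)])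
        then show ?thesis unfolding split using e1
          by (elim eventually_mono) (metis add.right_neutral add_less_le_mono)
      qed
    qed
    moreover have "\<psi> y - \<psi> x \<le> \<psi> b - \<psi> a" using \<psi>(2)[of a x] \<psi>(2)[of y b] xy by auto
    ultimately show "U x \<le> U y + \<epsilon>" using \<psi>(3) by linarith
  qed
qed

lemma diff_mono:
  assumes ab: "a < b" and maj: "laplace_major a b f U" and mnr: "laplace_minor a b f V"
    and xy: "a \<le> x" "x \<le> y" "y \<le> b"
  shows "U x - V x \<le> U y - V y"
proof -
  have contU: "continuous_on {a..b} U" using maj by (simp add: laplace_major_def)
  have contV: "continuous_on {a..b} V" using mnr by (simp add: laplace_minor_def)
  have contH: "continuous_on {a..b} (\<lambda>z. U z - V z)"
    using contU contV by (intro continuous_on_diff)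
  show ?thesis
  proof (rule mono_from_right[OF ab contH _ xy])
    fix z c :: real assume z: "z \<in> {a..<b}" and c: "c < 0"
    have split: "lap_right (\<lambda>z. U z - V z) z (lap_delta a b z) s =
        lap_right U z (lap_delta a b z) s - lap_right V z (lap_delta a b z) s" for s
      by (rule lap_right_diff[OF cont_sub[OF contU ab z] cont_sub[OF contV ab z]])
    have e1: "\<forall>\<^sub>F s in at_top. f z + c/2 < lap_right U z (lap_delta a b z) s"
      by (rule from_major[OF maj z]) (use c in simp)
    have e2: "\<forall>\<^sub>F s in at_top. lap_right V z (lap_delta a b z) s < f z - c/2"
      by (rule from_minor[OF mnr z]) (use c in simp)
    show "\<forall>\<^sub>F s in at_top. c < lap_right (\<lambda>z. U z - V z) z (lap_delta a b z) s"
      unfolding split using e1 e2 by eventually_elim simp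
  qed
qed

definition ext :: "real \<Rightarrow> real \<Rightarrow> (real \<Rightarrow> real) \<Rightarrow> real \<Rightarrow> real" where
  "ext a b G y = G (max a (min y b))"

definition RQ :: "real \<Rightarrow> real \<Rightarrow> (real \<Rightarrow> real) \<Rightarrow> nat \<Rightarrow> real \<Rightarrow> real" where
  "RQ a b G k x = lap_right (ext a b G) x (b - a) (real k)"

lemma ext_cont:
  assumes "a \<le> b" "continuous_on {a..b} G"
  shows "continuous_on UNIV (ext a b G)"
  unfolding ext_def
  by (rule continuous_on_compose2[OF assms(2)]) (use assms(1) in \<open>auto intro!: continuous_intros\<close>)

lemma ext_eq: "y \<in> {a..b} \<Longrightarrow> ext a b G y = G y"
  by (auto simp: ext_def max_def min_def)

lemma ext_mono:
  assumes "a \<le> b" "\<And>x y. a \<le> x \<Longrightarrow> x \<le> y \<Longrightarrow> y \<le> b \<Longrightarrow> G x \<le> G y" "y \<le> z"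
  shows "ext a b G y \<le> ext a b G z"
  unfolding ext_def using assms by (intro assms(2)) auto

lemma ext_bounds:
  assumes "a \<le> b" "\<And>x y. a \<le> x \<Longrightarrow> x \<le> y \<Longrightarrow> y \<le> b \<Longrightarrow> G x \<le> G y"
  shows "G a \<le> ext a b G y" "ext a b G y \<le> G b"
  unfolding ext_def using assms by (auto intro!: assms(2))

lemma RQ_cont:
  assumes "a \<le> b" "continuous_on {a..b} G"
  shows "continuous_on UNIV (RQ a b G k)"
proof -
  note ec = ext_cont[OF assms]
  have "continuous_on (UNIV \<times> cbox 0 (b - a)) (\<lambda>(x, t). exp (- real k * t) * (ext a b G (x + t) - ext a b G x))"
    by (auto intro!: continuous_intros continuous_on_compose2[OF ec] simp: split_beta)
  then have "continuous_on UNIV (\<lambda>x. integral (cbox 0 (b - a)) (\<lambda>t. exp (- real k * t) * (ext a b G (x + t) - ext a b G x)))"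
    by (rule integral_continuous_on_param)
  then show ?thesis
    unfolding RQ_def lap_right_def by (auto intro!: continuous_intros)
qed

lemma RQ_borel:
  assumes "a \<le> b" "continuous_on {a..b} G"
  shows "RQ a b G k \<in> borel_measurable borel"
  using RQ_cont[OF assms] by (rule borel_measurable_continuous_onI)

lemma RQ_diff:
  assumes "a \<le> b" "continuous_on {a..b} U" "continuous_on {a..b} V"
  shows "RQ a b (\<lambda>y. U y - V y) k x = RQ a b U k x - RQ a b V k x"
proof -
  have "ext a b (\<lambda>y. U y - V y) = (\<lambda>y. ext a b U y - ext a b V y)"
    by (auto simp: ext_def)
  then show ?thesis
    unfolding RQ_def
    using lap_right_diff[OF continuous_on_subset[OF ext_cont[OF assms(1,2)]] continuous_on_subset[OF ext_cont[OF assms(1,3)]]]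
    by simp
qed

lemma RQ_nonneg:
  assumes "a \<le> b" "\<And>x y. a \<le> x \<Longrightarrow> x \<le> y \<Longrightarrow> y \<le> b \<Longrightarrow> G x \<le> G y"
    and cont: "continuous_on {a..b} G"
  shows "0 \<le> RQ a b G k x"
proof -
  have "0 \<le> integral {0..b-a} (\<lambda>t. exp (- real k * t) * (ext a b G (x + t) - ext a b G x))"
  proof (rule integral_nonneg)
    show "(\<lambda>t. exp (- real k * t) * (ext a b G (x + t) - ext a b G x)) integrable_on {0..b - a}"
      by (intro integrable_continuous_real continuous_intros continuous_on_compose2[OF ext_cont[OF assms(1) cont]]) auto
  qed (use ext_mono[OF assms(1,2)] in \<open>auto intro!: mult_nonneg_nonneg\<close>)
  then show ?thesis unfolding RQ_def lap_right_def by simp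
qed

lemma lap_right_transfer:
  fixes F :: "real \<Rightarrow> real"
  assumes cont: "continuous_on UNIV F" and d: "0 < d1" "d1 \<le> d2"
  shows "((\<lambda>s. lap_right F x d2 s - lap_right F x d1 s) \<longlongrightarrow> 0) at_top"
proof -
  define h where "h s t = exp (- s * t) * (F (x + t) - F x)" for s t
  have hcont: "continuous_on S (h s)" for S s
    unfolding h_def by (auto intro!: continuous_intros continuous_on_compose2[OF cont])
  have hint: "h s integrable_on {u..v}" for s u v
    by (rule integrable_continuous_real[OF hcont])
  have split: "lap_right F x d2 s - lap_right F x d1 s = s^2 * integral {d1..d2} (h s)" for s
  proof -
    have "integral {0..d1} (h s) + integral {d1..d2} (h s) = integral {0..d2} (h s)"
      using d by (intro Henstock_Kurzweil_Integration.integral_combine hint) auto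
    then show ?thesis unfolding lap_right_def h_def[symmetric] by (metis distrib_left add_diff_cancel_left')
  qed
  obtain B where B: "\<forall>t\<in>{d1..d2}. \<bar>F (x + t) - F x\<bar> \<le> B"
  proof -
    have "continuous_on {d1..d2} (\<lambda>t. F (x + t) - F x)"
      by (auto intro!: continuous_intros continuous_on_compose2[OF cont])
    from compact_imp_bounded[OF compact_continuous_image[OF this compact_Icc]]
    show ?thesis using that by (auto simp: bounded_real)
  qed
  have ev: "\<forall>\<^sub>F s in at_top. norm (lap_right F x d2 s - lap_right F x d1 s) \<le> (B * (d2 - d1)) * s^2 * exp (- s * d1)"
    using eventually_ge_at_top[of 0]
  proof eventually_elim
    case (elim s)
    have "norm (integral {d1..d2} (h s)) \<le> integral {d1..d2} (\<lambda>t. exp (- s * d1) * B)"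
    proof (rule integral_norm_bound_integral[OF hint])
      show "(\<lambda>t. exp (- s * d1) * B) integrable_on {d1..d2}" by (intro integrable_continuous_real continuous_intros)
      fix t assume t: "t \<in> {d1..d2}"
      have "exp (- s * t) \<le> exp (- s * d1)" using t elim by (simp add: mult_left_mono)
      then have "exp (- s * t) * \<bar>F (x + t) - F x\<bar> \<le> exp (- s * d1) * B"
        using B t by (intro mult_mono) auto
      then show "norm (h s t) \<le> exp (- s * d1) * B" by (simp add: h_def abs_mult)
    qed
    also have "\<dots> = (d2 - d1) * (exp (- s * d1) * B)" using d by simp
    finally have "norm (integral {d1..d2} (h s)) \<le> (d2 - d1) * (exp (- s * d1) * B)" .
    then have "s^2 * norm (integral {d1..d2} (h s)) \<le> s^2 * ((d2 - d1) * (exp (- s * d1) * B))"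
      by (intro mult_left_mono) auto
    then show ?case unfolding split by (simp add: abs_mult algebra_simps)
  qed
  show ?thesis
    by (rule Lim_null_comparison[OF ev]) (use d in \<open>intro exp_sq_tendsto\<close>)
qed

lemma ev_seq: "\<forall>\<^sub>F s in at_top. P s \<Longrightarrow> \<forall>\<^sub>F k in sequentially. P (real k)"
  using filterlim_real_sequentially by (simp add: filterlim_iff)

lemma RQ_close:
  assumes ab: "a < b" and cont: "continuous_on {a..b} G" and x: "x \<in> {a..<b}"
  shows "((\<lambda>s. lap_right (ext a b G) x (b - a) s - lap_right G x (lap_delta a b x) s) \<longlongrightarrow> 0) at_top"
proof -
  note dp = lap_delta_props[OF ab x]
  have "lap_right G x (lap_delta a b x) s = lap_right (ext a b G) x (lap_delta a b x) s" for s
    unfolding lap_right_def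
    by (intro arg_cong2[where f="(*)"] refl integral_cong) (use x dp in \<open>auto simp: ext_eq\<close>)
  then show ?thesis
    using lap_right_transfer[OF ext_cont[OF _ cont] dp(1,3)] ab by simp
qed

lemma RQ_major:
  assumes ab: "a < b" and maj: "laplace_major a b f U" and x: "x \<in> {a..<b}" and c: "c < f x"
  shows "\<forall>\<^sub>F k in sequentially. c < RQ a b U k x"
proof -
  have cont: "continuous_on {a..b} U" using maj by (simp add: laplace_major_def)
  have e1: "\<forall>\<^sub>F s in at_top. (c + f x) / 2 < lap_right U x (lap_delta a b x) s"
    by (rule from_major[OF maj x]) (use c in simp)
  have e2: "\<forall>\<^sub>F s in at_top. dist (lap_right (ext a b U) x (b - a) s - lap_right U x (lap_delta a b x) s) 0 < (f x - c) / 2"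
    using RQ_close[OF ab cont x] c by (intro tendstoD) auto
  have "\<forall>\<^sub>F s in at_top. c < lap_right (ext a b U) x (b - a) s"
    using e1 e2 
  proof eventually_elim
    case (elim s)
    then show ?case unfolding dist_real_def abs_less_iff by (elim conjE) (simp add: field_simps)
  qed
  then show ?thesis unfolding RQ_def by (rule ev_seq)
qed

lemma RQ_minor:
  assumes ab: "a < b" and mnr: "laplace_minor a b f V" and x: "x \<in> {a..<b}" and c: "f x < c"
  shows "\<forall>\<^sub>F k in sequentially. RQ a b V k x < c"
proof -
  have cont: "continuous_on {a..b} V" using mnr by (simp add: laplace_minor_def)
  have e1: "\<forall>\<^sub>F s in at_top. lap_right V x (lap_delta a b x) s < (c + f x) / 2"
    by (rule from_minor[OF mnr x]) (use c in simp)
  have e2: "\<forall>\<^sub>F s in at_top. dist (lap_right (ext a b V) x (b - a) s - lap_right V x (lap_delta a b x) s) 0 < (c - f x) / 2"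
    using RQ_close[OF ab cont x] c by (intro tendstoD) auto
  have "\<forall>\<^sub>F s in at_top. lap_right (ext a b V) x (b - a) s < c"
    using e1 e2 
  proof eventually_elim
    case (elim s)
    then show ?case unfolding dist_real_def abs_less_iff by (elim conjE) (simp add: field_simps)
  qed
  then show ?thesis unfolding RQ_def by (rule ev_seq)
qed

lemma shift_bound:
  assumes ab: "a < b" and cont: "continuous_on {a..b} G"
    and mono: "\<And>x y. a \<le> x \<Longrightarrow> x \<le> y \<Longrightarrow> y \<le> b \<Longrightarrow> G x \<le> G y" and t: "0 \<le> t"
  shows "integral {a..b} (\<lambda>x. ext a b G (x + t) - ext a b G x) \<le> t * (G b - G a)"
proof -
  define E where "E = ext a b G"
  have Ec: "continuous_on UNIV E" unfolding E_def using ext_cont[OF _ cont] ab by simp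
  have Ei: "E integrable_on {u..v}" for u v
    by (rule integrable_continuous_real[OF continuous_on_subset[OF Ec]]) auto
  have Eti: "(\<lambda>x. E (x + t)) integrable_on {u..v}" for u v
    by (rule integrable_continuous_real) (auto intro!: continuous_intros continuous_on_compose2[OF Ec])
  have sh: "integral {a..b} (\<lambda>x. E (x + t)) = integral {a+t..b+t} E"
  proof -
    have "(\<lambda>x. E (x + t)) = E \<circ> (+) t" by (auto simp: fun_eq_iff add.commute)
    then show ?thesis using integral_shift_Icc_real[of a b E t] by simp
  qed
  have c1: "integral {a..a+t} E + integral {a+t..b+t} E = integral {a..b+t} E"
    using ab t by (intro Henstock_Kurzweil_Integration.integral_combine Ei) auto
  have c2: "integral {a..b} E + integral {b..b+t} E = integral {a..b+t} E"
    using ab t by (intro Henstock_Kurzweil_Integration.integral_combine Ei) auto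
  have i1: "integral {b..b+t} E \<le> integral {b..b+t} (\<lambda>_. G b)"
    by (rule integral_le[OF Ei]) (use ext_bounds[OF less_imp_le[OF ab] mono] in \<open>auto simp: E_def\<close>)
  have i2: "integral {a..a+t} (\<lambda>_. G a) \<le> integral {a..a+t} E"
    by (rule integral_le[OF _ Ei]) (use ext_bounds[OF less_imp_le[OF ab] mono] in \<open>auto simp: E_def\<close>)
  have "integral {a..b} (\<lambda>x. E (x + t) - E x) = integral {a..b} (\<lambda>x. E (x + t)) - integral {a..b} E"
    by (rule integral_diff[OF Eti Ei])
  then show ?thesis using sh c1 c2 i1 i2 t by (simp add: E_def algebra_simps)
qed

lemma RQ_int_bound:
  assumes ab: "a < b" and cont: "continuous_on {a..b} G"
    and mono: "\<And>x y. a \<le> x \<Longrightarrow> x \<le> y \<Longrightarrow> y \<le> b \<Longrightarrow> G x \<le> G y"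
  shows "integral {a..b} (RQ a b G k) \<le> G b - G a"
proof -
  define E where "E = ext a b G"
  have Ec: "continuous_on UNIV E" unfolding E_def using ext_cont[OF _ cont] ab by simp
  define L where "L = b - a"
  define h where "h x t = exp (- real k * t) * (E (x + t) - E x)" for x t
  have hc: "continuous_on S (\<lambda>(x, t). h x t)" for S
    unfolding h_def by (auto intro!: continuous_intros continuous_on_compose2[OF Ec] simp: split_beta)
  have RQeq: "RQ a b G k = (\<lambda>x. (real k)^2 * integral {0..L} (h x))"
    by (rule ext) (simp add: RQ_def lap_right_def h_def[abs_def] E_def L_def)
  have swap: "integral {a..b} (\<lambda>x. integral {0..L} (h x)) = integral {0..L} (\<lambda>t. integral {a..b} (\<lambda>x. h x t))"
    using integral_swap_continuous[of a 0 b L h] hc by simp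
  have GG: "G a \<le> G b" using mono ab by simp
  have inner: "integral {a..b} (\<lambda>x. h x t) \<le> (G b - G a) * (t * exp (- real k * t))" if t: "t \<in> {0..L}" for t
  proof -
    have "integral {a..b} (\<lambda>x. h x t) = exp (- real k * t) * integral {a..b} (\<lambda>x. E (x + t) - E x)"
      by (simp add: h_def)
    also have "\<dots> \<le> exp (- real k * t) * (t * (G b - G a))"
      using shift_bound[OF ab cont mono, of t] t by (intro mult_left_mono) (auto simp: E_def)
    finally show ?thesis by (simp add: algebra_simps)
  qed
  have intc: "continuous_on UNIV (\<lambda>t. integral (cbox a b) (\<lambda>x. h x t))"
  proof (rule integral_continuous_on_param)
    show "continuous_on (UNIV \<times> cbox a b) (\<lambda>(t, x). h x t)"
      unfolding h_def by (auto intro!: continuous_intros continuous_on_compose2[OF Ec] simp: split_beta)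
  qed
  have "integral {0..L} (\<lambda>t. integral {a..b} (\<lambda>x. h x t)) \<le> integral {0..L} (\<lambda>t. (G b - G a) * (t * exp (- real k * t)))"
  proof (rule integral_le)
    show "(\<lambda>t. integral {a..b} (\<lambda>x. h x t)) integrable_on {0..L}"
      using integrable_continuous_real[OF continuous_on_subset[OF intc]] by simp
    show "(\<lambda>t. (G b - G a) * (t * exp (- real k * t))) integrable_on {0..L}"
      by (intro integrable_continuous_real continuous_intros)
  qed (use inner in auto)
  also have "\<dots> = (G b - G a) * integral {0..L} (\<lambda>t. t * exp (- real k * t))" by simp
  finally have A: "integral {a..b} (\<lambda>x. integral {0..L} (h x)) \<le> (G b - G a) * integral {0..L} (\<lambda>t. t * exp (- real k * t))"
    using swap by simp
  have "integral {a..b} (RQ a b G k) = (real k)^2 * integral {a..b} (\<lambda>x. integral {0..L} (h x))"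
    unfolding RQeq by simp
  also have "\<dots> \<le> (real k)^2 * ((G b - G a) * integral {0..L} (\<lambda>t. t * exp (- real k * t)))"
    using A by (intro mult_left_mono) auto
  also have "\<dots> = (G b - G a) * ((real k)^2 * integral {0..L} (\<lambda>t. t * exp (- real k * t)))"
    by (simp add: algebra_simps)
  also have "\<dots> \<le> (G b - G a) * 1"
    using J_le1[of "real k" L] ab GG by (intro mult_left_mono) (auto simp: L_def)
  finally show ?thesis by simp
qed

lemma RQ_ennreal_borel:
  assumes "a \<le> b" "continuous_on {a..b} G"
  shows "(\<lambda>x. ennreal (RQ a b G k x)) \<in> borel_measurable borel"
  using measurable_compose[OF RQ_borel[OF assms] measurable_ennreal] by (simp add: o_def)

lemma liminf_RQ_borel:
  assumes "a \<le> b" "continuous_on {a..b} G"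
  shows "(\<lambda>x. liminf (\<lambda>k. ennreal (RQ a b G k x))) \<in> borel_measurable borel"
  by (intro borel_measurable_liminf RQ_ennreal_borel[OF assms])

lemma fatou_RQ:
  assumes ab: "a < b" and cont: "continuous_on {a..b} G"
    and mono: "\<And>x y. a \<le> x \<Longrightarrow> x \<le> y \<Longrightarrow> y \<le> b \<Longrightarrow> G x \<le> G y"
  shows "(\<integral>\<^sup>+x. liminf (\<lambda>k. ennreal (RQ a b G k x)) * indicator {a..b} x \<partial>lborel) \<le> ennreal (G b - G a)"
proof -
  define u where "u k x = ennreal (RQ a b G k x) * indicator {a..b} x" for k x
  have um: "u k \<in> borel_measurable lborel" for k
    unfolding u_def using RQ_ennreal_borel[OF less_imp_le[OF ab] cont] by measurable
  have lim: "liminf (\<lambda>k. u k x) = liminf (\<lambda>k. ennreal (RQ a b G k x)) * indicator {a..b} x" for x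
    by (cases "x \<in> {a..b}") (simp_all add: u_def Liminf_const)
  have each: "integral\<^sup>N lborel (u k) \<le> ennreal (G b - G a)" for k
  proof -
    have "integral\<^sup>N lborel (u k) = ennreal (integral {a..b} (RQ a b G k))"
      unfolding u_def
      by (intro nn_integral_has_integral_lebesgue' RQ_nonneg[OF less_imp_le[OF ab] mono cont]
            integrable_integral integrable_continuous_real continuous_on_subset[OF RQ_cont[OF less_imp_le[OF ab] cont]]) auto
    also have "\<dots> \<le> ennreal (G b - G a)"
      by (intro ennreal_leI RQ_int_bound[OF ab cont mono])
    finally show ?thesis .
  qed
  have "(\<integral>\<^sup>+x. liminf (\<lambda>k. u k x) \<partial>lborel) \<le> liminf (\<lambda>k. integral\<^sup>N lborel (u k))"
    by (rule nn_integral_liminf[OF um])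
  also have "\<dots> \<le> ennreal (G b - G a)"
    by (rule Liminf_le) (use each in auto)
  finally show ?thesis by (simp add: lim)
qed

lemma liminf_lower:
  assumes "\<And>c. c < f \<Longrightarrow> \<forall>\<^sub>F k in sequentially. c < r k" and "\<And>k. 0 \<le> r k"
  shows "ennreal f \<le> liminf (\<lambda>k. ennreal (r k))"
proof (subst le_Liminf_iff, intro allI impI)
  fix y assume y: "y < ennreal f"
  then obtain y' where y': "y = ennreal y'" "0 \<le> y'" by (cases y rule: ennreal_cases) auto
  with y have "y' < f" by (cases "f \<ge> 0") (auto simp: ennreal_less_iff ennreal_neg)
  then have "\<forall>\<^sub>F k in sequentially. y' < r k" by (rule assms(1))
  then show "\<forall>\<^sub>F k in sequentially. y < ennreal (r k)"
    by eventually_elim (use y' in \<open>simp add: ennreal_less_iff\<close>)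
qed

lemma liminf_upper:
  assumes "\<exists>\<^sub>F k in sequentially. X k \<le> (C :: ennreal)"
  shows "liminf X \<le> C"
proof (rule ccontr)
  assume "\<not> liminf X \<le> C"
  then have "C < liminf X" by simp
  then have "\<forall>\<^sub>F k in sequentially. C < X k" using le_Liminf_iff[of "liminf X" sequentially X] by auto
  then have "\<forall>\<^sub>F k in sequentially. \<not> X k \<le> C" by (rule eventually_mono) (simp add: not_le)
  with assms show False unfolding frequently_def by simp
qed

lemma liminf_small:
  assumes "liminf X < (C :: ennreal)"
  shows "\<exists>\<^sub>F k in sequentially. X k < C"
proof (rule ccontr)
  assume "\<not> (\<exists>\<^sub>F k in sequentially. X k < C)"
  then have "\<forall>\<^sub>F k in sequentially. C \<le> X k" unfolding frequently_def by (simp add: not_less)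
  then have "C \<le> liminf X" by (rule Liminf_bounded)
  with assms show False by simp
qed

theorem theorem5p12:
  fixes f :: "real \<Rightarrow> real" and a b :: real
  assumes "a < b"
    and "laplace_integrable_on f a b"
    and "AE x in lebesgue. x \<in> {a..b} \<longrightarrow> f x \<ge> 0"
  shows "f absolutely_integrable_on {a..b}"
proof -
  note ab = assms(1) and ae = assms(3)
  have ab': "a \<le> b" using ab by simp
  obtain I where I: "(SUP V\<in>{V. laplace_minor a b f V}. ereal (V b - V a)) = ereal I"
    "(INF U\<in>{U. laplace_major a b f U}. ereal (U b - U a)) = ereal I"
    using assms(2) unfolding laplace_integrable_on_def by blast
  have "\<exists>U. laplace_major a b f U \<and> U b - U a < I + 1 / real (Suc n)" for n
  proof -
    have "(INF U\<in>{U. laplace_major a b f U}. ereal (U b - U a)) < ereal (I + 1 / real (Suc n))"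
      unfolding I by simp
    then show ?thesis unfolding INF_less_iff by auto
  qed
  then obtain U where U: "\<And>n. laplace_major a b f (U n)" "\<And>n. U n b - U n a < I + 1 / real (Suc n)"
    by metis
  have "\<exists>V. laplace_minor a b f V \<and> I - 1 / real (Suc n) < V b - V a" for n
  proof -
    have "ereal (I - 1 / real (Suc n)) < (SUP V\<in>{V. laplace_minor a b f V}. ereal (V b - V a))"
      unfolding I by simp
    then show ?thesis unfolding less_SUP_iff by auto
  qed
  then obtain V where V: "\<And>n. laplace_minor a b f (V n)" "\<And>n. I - 1 / real (Suc n) < V n b - V n a"
    by metis
  have contU: "continuous_on {a..b} (U n)" for n using U(1) by (simp add: laplace_major_def)
  have contV: "continuous_on {a..b} (V n)" for n using V(1) by (simp add: laplace_minor_def)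
  have monoU: "U n x \<le> U n y" if "a \<le> x" "x \<le> y" "y \<le> b" for n x y
    by (rule major_mono[OF ab U(1) ae that])
  define G where "G n y = U n y - V n y" for n y
  have contG: "continuous_on {a..b} (G n)" for n
    unfolding G_def[abs_def] using contU contV by (intro continuous_on_diff)
  have monoG: "G n x \<le> G n y" if "a \<le> x" "x \<le> y" "y \<le> b" for n x y
    unfolding G_def by (rule diff_mono[OF ab U(1) V(1) that])
  have Gsmall: "G n b - G n a \<le> 2 / real (Suc n)" for n
    using U(2)[of n] V(2)[of n] by (simp add: G_def)
  have RQG: "RQ a b (G n) k x = RQ a b (U n) k x - RQ a b (V n) k x" for n k x
    unfolding G_def[abs_def] by (rule RQ_diff[OF ab' contU contV])
  define D where "D n x = liminf (\<lambda>k. ennreal (RQ a b (G n) k x))" for n x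
  define P where "P n x = liminf (\<lambda>k. ennreal (RQ a b (U n) k x))" for n x
  have Dm: "D n \<in> borel_measurable borel" for n
    unfolding D_def by (rule liminf_RQ_borel[OF ab' contG])
  have Pm: "P n \<in> borel_measurable borel" for n
    unfolding P_def by (rule liminf_RQ_borel[OF ab' contU])
  define Z where "Z x = (INF n. D n x)" for x
  have Zm: "Z \<in> borel_measurable borel" unfolding Z_def using Dm by measurable
  have Zint: "(\<integral>\<^sup>+x. Z x * indicator {a..b} x \<partial>lborel) = 0"
  proof -
    have le: "(\<integral>\<^sup>+x. Z x * indicator {a..b} x \<partial>lborel) \<le> ennreal (2 / real (Suc m))" for m
    proof -
      have "(\<integral>\<^sup>+x. Z x * indicator {a..b} x \<partial>lborel) \<le> (\<integral>\<^sup>+x. D m x * indicator {a..b} x \<partial>lborel)"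
        by (intro nn_integral_mono mult_right_mono) (auto simp: Z_def intro: INF_lower)
      also have "\<dots> \<le> ennreal (G m b - G m a)"
        unfolding D_def by (rule fatou_RQ[OF ab contG monoG])
      also have "\<dots> \<le> ennreal (2 / real (Suc m))" by (intro ennreal_leI Gsmall)
      finally show ?thesis .
    qed
    have "(\<integral>\<^sup>+x. Z x * indicator {a..b} x \<partial>lborel) \<le> 0"
    proof (rule ennreal_le_epsilon)
      fix e :: real assume e: "0 < e"
      obtain m :: nat where "2 / e < real (Suc m)"
        using reals_Archimedean2[of "2 / e"] by (metis less_Suc_eq of_nat_less_iff less_trans)
      then have "2 / real (Suc m) < e" using e by (simp add: field_simps)
      then have "ennreal (2 / real (Suc m)) \<le> 0 + ennreal e" by (simp add: ennreal_leI)
      with le[of m] show "(\<integral>\<^sup>+x. Z x * indicator {a..b} x \<partial>lborel) \<le> 0 + ennreal e" by (rule order_trans)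
    qed
    then show ?thesis by simp
  qed
  have aeZ: "AE x in lborel. Z x * indicator {a..b} x = 0"
    using Zint by (subst (asm) nn_integral_0_iff_AE) (use Zm in measurable)
  have lowP: "ennreal (f x) \<le> P n x" if x: "x \<in> {a..<b}" for n x
    unfolding P_def
    by (rule liminf_lower) (auto intro: RQ_major[OF ab U(1) x] RQ_nonneg[OF ab' monoU contU])
  define \<phi> where "\<phi> x = (INF n. P n x)" for x
  have \<phi>m: "\<phi> \<in> borel_measurable borel" unfolding \<phi>_def using Pm by measurable
  have good: "f x = enn2real (\<phi> x)"
    if x: "x \<in> {a..<b}" and fx: "0 \<le> f x" and Zx: "Z x = 0" for x
  proof -
    have "\<phi> x \<le> ennreal (f x)"
    proof (rule ennreal_le_epsilon)
      fix e :: real assume e: "0 < e"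
      define d where "d = e / 2"
      have d: "0 < d" using e by (simp add: d_def)
      have "Z x < ennreal d" using Zx d by simp
      then obtain n where "D n x < ennreal d" unfolding Z_def by (auto simp: INF_less_iff)
      then have fr: "\<exists>\<^sub>F k in sequentially. ennreal (RQ a b (G n) k x) < ennreal d"
        unfolding D_def by (rule liminf_small)
      have ev: "\<forall>\<^sub>F k in sequentially. RQ a b (V n) k x < f x + d"
        by (rule RQ_minor[OF ab V(1) x]) (use d in simp)
      have "\<exists>\<^sub>F k in sequentially. ennreal (RQ a b (U n) k x) \<le> ennreal (f x + e)"
        using frequently_eventually_conj[OF fr ev]
      proof (rule frequently_elim1)
        fix k assume k: "RQ a b (V n) k x < f x + d \<and> ennreal (RQ a b (G n) k x) < ennreal d"
        have G0: "0 \<le> RQ a b (G n) k x" by (rule RQ_nonneg[OF ab' monoG contG])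
        have "RQ a b (G n) k x < d" using k ennreal_less_iff[OF G0] by blast
        with k have "RQ a b (U n) k x \<le> f x + e" using RQG[of n k x] unfolding d_def by linarith
        then show "ennreal (RQ a b (U n) k x) \<le> ennreal (f x + e)" by (rule ennreal_leI)
      qed
      then have "P n x \<le> ennreal (f x + e)"
        unfolding P_def by (rule liminf_upper)
      then have "\<phi> x \<le> ennreal (f x + e)"
        unfolding \<phi>_def by (rule INF_lower2[rotated]) simp
      also have "ennreal (f x + e) = ennreal (f x) + ennreal e"
        by (rule ennreal_plus) (use fx e in auto)
      finally show "\<phi> x \<le> ennreal (f x) + ennreal e" .
    qed
    moreover have "ennreal (f x) \<le> \<phi> x" unfolding \<phi>_def by (rule INF_greatest) (rule lowP[OF x])
    ultimately have "\<phi> x = ennreal (f x)" by (rule antisym)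
    then show ?thesis using fx by simp
  qed
  have aeL: "AE x in lebesgue. x \<in> {a..b} \<longrightarrow> f x = enn2real (\<phi> x)"
  proof -
    have "AE x in lebesgue. Z x * indicator {a..b} x = 0" by (rule AE_completion[OF aeZ])
    moreover have "AE x in lebesgue. x \<noteq> b" by (rule AE_completion[OF AE_lborel_singleton])
    ultimately show ?thesis using ae
    proof eventually_elim
      case (elim x)
      show ?case
      proof
        assume xab: "x \<in> {a..b}"
        then have "x \<in> {a..<b}" using elim by auto
        moreover have "Z x = 0" using elim xab by simp
        ultimately show "f x = enn2real (\<phi> x)" using good elim xab by blast
      qed
    qed
  qed
  define g where "g x = indicator {a..b} x *\<^sub>R f x" for x
  define g' where "g' x = indicator {a..b} x * enn2real (\<phi> x)" for x
  have g'm: "g' \<in> borel_measurable lebesgue"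
  proof -
    have "g' \<in> borel_measurable borel" unfolding g'_def using \<phi>m by measurable
    then have "g' \<in> borel_measurable lborel" by simp
    then show ?thesis by (rule measurable_completion)
  qed
  have gm: "g \<in> borel_measurable lebesgue"
    by (rule borel_measurable_AE[OF g'm]) (use aeL in \<open>auto simp: g_def g'_def indicator_def elim: eventually_mono\<close>)
  have gnn: "AE x in lebesgue. 0 \<le> g x"
    using ae by eventually_elim (auto simp: g_def indicator_def)
  have "(\<integral>\<^sup>+x. ennreal (g x) \<partial>lebesgue) \<le> (\<integral>\<^sup>+x. P 0 x * indicator {a..b} x \<partial>lebesgue)"
  proof (rule nn_integral_mono_AE)
    have "AE x in lebesgue. x \<noteq> b" by (rule AE_completion[OF AE_lborel_singleton])
    then show "AE x in lebesgue. ennreal (g x) \<le> P 0 x * indicator {a..b} x"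
    proof eventually_elim
      case (elim x)
      show ?case
      proof (cases "x \<in> {a..b}")
        case True
        then have "x \<in> {a..<b}" using elim by auto
        then show ?thesis using lowP[of x 0] True by (simp add: g_def)
      qed (simp add: g_def)
    qed
  qed
  also have "\<dots> = (\<integral>\<^sup>+x. P 0 x * indicator {a..b} x \<partial>lborel)"
    by (simp add: nn_integral_completion)
  also have "\<dots> \<le> ennreal (U 0 b - U 0 a)"
    unfolding P_def by (rule fatou_RQ[OF ab contU monoU])
  also have "\<dots> < \<infinity>" by simp
  finally have "integrable lebesgue g" by (intro integrableI_nonneg[OF gm gnn])
  then show ?thesis unfolding set_integrable_def g_def .
qed

end
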